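(* Let $\Omega\subset\mathbb{R}^d$ ($d\in\{2,3\}$) be a bounded polytopal Lipschitz domain, $\mathcal{T}_h$ a simplicial mesh of $\Omega$, $\alpha,\tau>0$, $k>0$, and let $\mathbf{m}_h^0\in\mathcal{M}_h$ and $\mathbf{v}_h^0\in\mathcal{K}_h[\mathbf{m}_h^0]$. Consider the nonlinear angular momentum method (defined in the context) and let $i\in\mathbb{N}_0$. Suppose that for each $n=0,\dots,i$, the pair $(\mathbf{m}_h^{n+1},\mathbf{w}_h^{n+1})\in\mathcal{S}^1(\mathcal{T}_h)^3\times\mathcal{S}^1(\mathcal{T}_h)^3$ satisfies the defining equations of the method at step $n$. Then $\mathbf{m}_h^{i+1}\in\mathcal{M}_h$ and $\mathbf{w}_h^{i+1}\in\mathcal{K}_h[\mathbf{m}_h^{i+1}]$.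
   Context: Let $\mathcal{N}_h$ be the set of vertices of $\mathcal{T}_h$ and $\mathcal{S}^1(\mathcal{T}_h)$ the space of continuous, piecewise affine functions on $\mathcal{T}_h$. The nodal hat functions are $\{\varphi_z\}_{z\in\mathcal{N}_h}$ with $\varphi_z(z')=\delta_{zz'}$. Let $\mathcal{I}_h$ denote the nodal interpolant onto $\mathcal{S}^1(\mathcal{T}_h)$, applied componentwise for vector fields. The mass-lumped product is $(\boldsymbol\psi,\boldsymbol\phi)_h=\int_\Omega\mathcal{I}_h[\boldsymbol\psi\cdot\boldsymbol\phi]$ for continuous $\boldsymbol\psi,\boldsymbol\phi:\overline\Omega\to\mathbb{R}^3$, and $\|\cdot\|_h$ is the induced norm. The effective field $\mathbf{h}_{\rm eff}[\mathbf{m}]\in\mathbf{H}^1(\Omega)^*$ is defined by $\langle\mathbf{h}_{\rm eff}[\mathbf{m}],\boldsymbol\phi\rangle=-(\nabla\mathbf{m},\nabla\boldsymbol\phi)_{L^2(\Omega)}$. The map $\mathbf{P}_h:\mathbf{H}^1(\Omega)^*\to\mathcal{S}^1(\mathcal{T}_h)^3$ is defined by $(\mathbf{P}_h\mathbf{u},\boldsymbol\phi_h)_h=\langle\mathbf{u},\boldsymbol\phi_h\rangle$ for all $\boldsymbol\phi_h\in\mathcal{S}^1(\mathcal{T}_h)^3$. Let $\mathcal{M}_h=\{\boldsymbol\phi_h\in\mathcal{S}^1(\mathcal{T}_h)^3:|\boldsymbol\phi_h(z)|=1\ \forall z\in\mathcal{N}_h\}$. For $\boldsymbol\psi_h\in\mathcal{S}^1(\mathcal{T}_h)^3$,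 let $\mathcal{K}_h[\boldsymbol\psi_h]=\{\boldsymbol\phi_h\in\mathcal{S}^1(\mathcal{T}_h)^3:\boldsymbol\psi_h(z)\cdot\boldsymbol\phi_h(z)=0\ \forall z\in\mathcal{N}_h\}$. Notation: $d_t\phi^{i+1}=(\phi^{i+1}-\phi^i)/k$ and $\phi^{i+1/2}=(\phi^{i+1}+\phi^i)/2$. Nonlinear angular momentum method: set $\mathbf{w}_h^0=\mathcal{I}_h[\mathbf{m}_h^0\times\mathbf{v}_h^0]$. For each $i\in\mathbb{N}_0$, find $(\mathbf{m}_h^{i+1},\mathbf{w}_h^{i+1})$ such that for all $\boldsymbol\phi_h,\boldsymbol\psi_h\in\mathcal{S}^1(\mathcal{T}_h)^3$: $$(d_t\mathbf{m}_h^{i+1},\boldsymbol\phi_h)_h=-(\mathbf{m}_h^{i+1/2}\times\mathbf{w}_h^{i+1/2},\boldsymbol\phi_h)_h,$$ $$\tau(d_t\mathbf{w}_h^{i+1},\boldsymbol\psi_h)_h=(\mathbf{m}_h^{i+1/2}\times\mathbf{P}_h\mathbf{h}_{\rm eff}[\mathbf{m}_h^{i+1/2}],\boldsymbol\psi_h)_h-\alpha(\mathbf{m}_h^{i+1/2}\times d_t\mathbf{m}_h^{i+1},\boldsymbol\psi_h)_h-(\mathbf{m}_h^{i+1/2}\times\mathbf{w}_h^{i+1/2},\boldsymbol\psi_h)_h.$$ *)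

theory Defs
  imports "HOL-Analysis.Analysis"
begin

text \<open>Bounded Lipschitz domain: open, bounded, connected; near each boundary point
  the domain is (in suitably rotated coordinates, given by a unit direction e)
  the subgraph of a Lipschitz function on the hyperplane orthogonal to e.\<close>
definition lipschitz_domain :: "'a::euclidean_space set \<Rightarrow> bool" where
  "lipschitz_domain \<Omega> \<longleftrightarrow> open \<Omega> \<and> bounded \<Omega> \<and> connected \<Omega> \<and> \<Omega> \<noteq> {} \<and>
     (\<forall>x\<in>frontier \<Omega>. \<exists>r>0. \<exists>e g L. norm e = 1 \<and>
        L-lipschitz_on {u. u \<bullet> e = 0} g \<and>
        \<Omega> \<inter> ball x r = {y \<in> ball x r. y \<bullet> e < g (y - (y \<bullet> e) *\<^sub>R e)})"

definition verts :: "'a::euclidean_space set \<Rightarrow> 'a set" where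
  "verts T = {x. x extreme_point_of T}"

definition is_simplex :: "'a::euclidean_space set \<Rightarrow> bool" where
  "is_simplex T \<longleftrightarrow> (\<exists>S. finite S \<and> card S = DIM('a) + 1 \<and> \<not> affine_dependent S \<and> T = convex hull S)"

definition simplicial_mesh :: "'a::euclidean_space set set \<Rightarrow> 'a set \<Rightarrow> bool" where
  "simplicial_mesh \<T> \<Omega> \<longleftrightarrow> finite \<T> \<and> \<T> \<noteq> {} \<and> (\<forall>T\<in>\<T>. is_simplex T) \<and>
     \<Union>\<T> = closure \<Omega> \<and>
     (\<forall>T1\<in>\<T>. \<forall>T2\<in>\<T>. \<exists>S. S \<subseteq> verts T1 \<inter> verts T2 \<and> T1 \<inter> T2 = convex hull S)"

definition nodes :: "'a::euclidean_space set set \<Rightarrow> 'a set" where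
  "nodes \<T> = (\<Union>T\<in>\<T>. verts T)"

definition S1 :: "'a::euclidean_space set set \<Rightarrow> ('a \<Rightarrow> real) set" where
  "S1 \<T> = {f. continuous_on (\<Union>\<T>) f \<and>
      (\<forall>T\<in>\<T>. \<exists>a c. \<forall>x\<in>T. f x = a \<bullet> x + c) \<and> (\<forall>x. x \<notin> \<Union>\<T> \<longrightarrow> f x = 0)}"

definition S1v :: "'a::euclidean_space set set \<Rightarrow> ('a \<Rightarrow> real^3) set" where
  "S1v \<T> = {f. \<forall>j. (\<lambda>x. f x $ j) \<in> S1 \<T>}"

definition hat :: "'a::euclidean_space set set \<Rightarrow> 'a \<Rightarrow> 'a \<Rightarrow> real" where
  "hat \<T> z = (THE f. f \<in> S1 \<T> \<and> (\<forall>z'\<in>nodes \<T>. f z' = (if z' = z then 1 else 0)))"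

definition interp :: "'a::euclidean_space set set \<Rightarrow> ('a \<Rightarrow> real) \<Rightarrow> 'a \<Rightarrow> real" where
  "interp \<T> f = (\<lambda>x. \<Sum>z\<in>nodes \<T>. f z * hat \<T> z x)"

definition interpv :: "'a::euclidean_space set set \<Rightarrow> ('a \<Rightarrow> real^3) \<Rightarrow> 'a \<Rightarrow> real^3" where
  "interpv \<T> f = (\<lambda>x. \<Sum>z\<in>nodes \<T>. hat \<T> z x *\<^sub>R f z)"

definition lumped :: "'a::euclidean_space set set \<Rightarrow> 'a set \<Rightarrow> ('a \<Rightarrow> real^3) \<Rightarrow> ('a \<Rightarrow> real^3) \<Rightarrow> real" where
  "lumped \<T> \<Omega> \<psi> \<phi> = integral \<Omega> (interp \<T> (\<lambda>x. \<psi> x \<bullet> \<phi> x))"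

definition grad_on :: "'a::euclidean_space set \<Rightarrow> ('a \<Rightarrow> real) \<Rightarrow> 'a" where
  "grad_on T f = (SOME a. \<exists>c. \<forall>x\<in>T. f x = a \<bullet> x + c)"

definition stiff :: "'a::euclidean_space set set \<Rightarrow> ('a \<Rightarrow> real^3) \<Rightarrow> ('a \<Rightarrow> real^3) \<Rightarrow> real" where
  "stiff \<T> m \<phi> = (\<Sum>T\<in>\<T>. integral T (\<lambda>_. \<Sum>j\<in>UNIV.
        grad_on T (\<lambda>x. m x $ j) \<bullet> grad_on T (\<lambda>x. \<phi> x $ j)))"

definition heff :: "'a::euclidean_space set set \<Rightarrow> ('a \<Rightarrow> real^3) \<Rightarrow> ('a \<Rightarrow> real^3) \<Rightarrow> real" where
  "heff \<T> m = (\<lambda>\<phi>. - stiff \<T> m \<phi>)"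

definition Ph :: "'a::euclidean_space set set \<Rightarrow> 'a set \<Rightarrow> (('a \<Rightarrow> real^3) \<Rightarrow> real) \<Rightarrow> 'a \<Rightarrow> real^3" where
  "Ph \<T> \<Omega> u = (THE p. p \<in> S1v \<T> \<and> (\<forall>\<phi>\<in>S1v \<T>. lumped \<T> \<Omega> p \<phi> = u \<phi>))"

definition Mh :: "'a::euclidean_space set set \<Rightarrow> ('a \<Rightarrow> real^3) set" where
  "Mh \<T> = {\<phi> \<in> S1v \<T>. \<forall>z\<in>nodes \<T>. norm (\<phi> z) = 1}"

definition Kh :: "'a::euclidean_space set set \<Rightarrow> ('a \<Rightarrow> real^3) \<Rightarrow> ('a \<Rightarrow> real^3) set" where
  "Kh \<T> \<psi> = {\<phi> \<in> S1v \<T>. \<forall>z\<in>nodes \<T>. \<psi> z \<bullet> \<phi> z = 0}"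

definition nam_step :: "'a::euclidean_space set set \<Rightarrow> 'a set \<Rightarrow> real \<Rightarrow> real \<Rightarrow> real \<Rightarrow>
    (nat \<Rightarrow> 'a \<Rightarrow> real^3) \<Rightarrow> (nat \<Rightarrow> 'a \<Rightarrow> real^3) \<Rightarrow> nat \<Rightarrow> bool" where
  "nam_step \<T> \<Omega> \<alpha> \<tau> k m w n \<longleftrightarrow>
     (let dtm = (\<lambda>x. (1 / k) *\<^sub>R (m (Suc n) x - m n x));
          dtw = (\<lambda>x. (1 / k) *\<^sub>R (w (Suc n) x - w n x));
          mh = (\<lambda>x. (1 / 2) *\<^sub>R (m (Suc n) x + m n x));
          wh = (\<lambda>x. (1 / 2) *\<^sub>R (w (Suc n) x + w n x));
          H = Ph \<T> \<Omega> (heff \<T> mh)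
      in (\<forall>\<phi>\<in>S1v \<T>. lumped \<T> \<Omega> dtm \<phi> = - lumped \<T> \<Omega> (\<lambda>x. cross3 (mh x) (wh x)) \<phi>) \<and>
         (\<forall>\<psi>\<in>S1v \<T>. \<tau> * lumped \<T> \<Omega> dtw \<psi> =
             lumped \<T> \<Omega> (\<lambda>x. cross3 (mh x) (H x)) \<psi>
           - \<alpha> * lumped \<T> \<Omega> (\<lambda>x. cross3 (mh x) (dtm x)) \<psi>
           - lumped \<T> \<Omega> (\<lambda>x. cross3 (mh x) (wh x)) \<psi>))"

end

theory Submission
  imports Defs
begin


lemma linear_real_inner:
  fixes g :: "'a::euclidean_space \<Rightarrow> real"
  assumes "linear g"
  shows "\<exists>a. \<forall>x. g x = a \<bullet> x"
proof -
  define a where "a = (\<Sum>b\<in>Basis. g b *\<^sub>R b)"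
  have "g x = a \<bullet> x" for x
  proof -
    have "g x = g (\<Sum>b\<in>Basis. (x \<bullet> b) *\<^sub>R b)" by (simp add: euclidean_representation)
    also have "\<dots> = (\<Sum>b\<in>Basis. (x \<bullet> b) * g b)"
      using assms by (simp add: linear_sum linear_scale)
    also have "\<dots> = a \<bullet> x" by (simp add: a_def inner_sum_right inner_commute mult.commute)
    finally show ?thesis .
  qed
  then show ?thesis by blast
qed

lemma affine_interp_exists:
  fixes S :: "'a::euclidean_space set" and h :: "'a \<Rightarrow> real"
  assumes "\<not> affine_dependent S"
  shows "\<exists>a c. \<forall>v\<in>S. a \<bullet> v + c = h v"
proof (cases "S = {}")
  case True then show ?thesis by auto
next
  case False
  then obtain v0 where v0: "v0 \<in> S" by auto
  define S' where "S' = S - {v0}"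
  have SS: "S = insert v0 S'" "v0 \<notin> S'" using v0 S'_def by auto
  have ind: "independent ((\<lambda>x. -v0 + x) ` S')"
    using assms affine_dependent_iff_dependent[OF SS(2)] SS(1) by simp
  obtain g where g: "linear g" "\<forall>y\<in>(\<lambda>x. -v0 + x) ` S'. g y = h (v0 + y) - h v0"
    using linear_independent_extend[OF ind, of "\<lambda>y. h (v0 + y) - h v0"] by blast
  obtain a where a: "\<forall>x. g x = a \<bullet> x" using linear_real_inner[OF g(1)] by blast
  have "a \<bullet> v + (h v0 - a \<bullet> v0) = h v" if "v \<in> S" for v
  proof (cases "v = v0")
    case True then show ?thesis by simp
  next
    case False
    then have "v \<in> S'" using that S'_def by auto
    then have "g (-v0 + v) = h v - h v0" using g(2) by auto
    then show ?thesis using a by (simp add: inner_diff_right algebra_simps)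
  qed
  then show ?thesis by blast
qed

lemma affine_on_hull:
  fixes S :: "'a::euclidean_space set"
  assumes "finite S" "x \<in> convex hull S"
  obtains u where "\<forall>v\<in>S. 0 \<le> u v" "sum u S = 1" "\<And>a c. a \<bullet> x + c = (\<Sum>v\<in>S. u v * (a \<bullet> v + c))"
proof -
  obtain u where u: "\<forall>v\<in>S. 0 \<le> u v" "sum u S = 1" "(\<Sum>v\<in>S. u v *\<^sub>R v) = x"
    using assms convex_hull_finite[OF assms(1)] by auto
  have "a \<bullet> x + c = (\<Sum>v\<in>S. u v * (a \<bullet> v + c))" for a c
  proof -
    have "(\<Sum>v\<in>S. u v * (a \<bullet> v + c)) = (\<Sum>v\<in>S. u v * (a \<bullet> v)) + c * sum u S"
      by (simp add: algebra_simps sum.distrib sum_distrib_left)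
    also have "(\<Sum>v\<in>S. u v * (a \<bullet> v)) = a \<bullet> x"
      using u(3)[symmetric] by (simp add: inner_sum_right)
    finally show ?thesis using u(2) by simp
  qed
  then show ?thesis using that u by blast
qed

lemma affine_on_hull2:
  fixes S :: "'a::euclidean_space set"
  assumes "finite S" "x \<in> convex hull S"
  shows "\<exists>u. (\<forall>v\<in>S. 0 \<le> u v) \<and> (\<forall>a c. a \<bullet> x + c = (\<Sum>v\<in>S. u v * (a \<bullet> v + c)))"
proof -
  obtain u where u: "\<forall>v\<in>S. 0 \<le> u v" "sum u S = 1" "(\<Sum>v\<in>S. u v *\<^sub>R v) = x"
    using assms convex_hull_finite[OF assms(1)] by auto
  have "a \<bullet> x + c = (\<Sum>v\<in>S. u v * (a \<bullet> v + c))" for a c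
  proof -
    have "(\<Sum>v\<in>S. u v * (a \<bullet> v + c)) = (\<Sum>v\<in>S. u v * (a \<bullet> v)) + c * sum u S"
      by (simp add: algebra_simps sum.distrib sum_distrib_left)
    also have "(\<Sum>v\<in>S. u v * (a \<bullet> v)) = a \<bullet> x"
      using u(3)[symmetric] by (simp add: inner_sum_right)
    finally show ?thesis using u(2) by simp
  qed
  then show ?thesis using u by blast
qed



lemma simplex_verts:
  fixes T :: "'a::euclidean_space set"
  assumes "is_simplex T"
  shows "finite (verts T)" "\<not> affine_dependent (verts T)" "T = convex hull (verts T)"
    "closed T" "verts T \<subseteq> T"
proof -
  obtain S where S: "finite S" "\<not> affine_dependent S" "T = convex hull S"
    using assms unfolding is_simplex_def by blast
  have V: "verts T = S"
    unfolding verts_def S(3) extreme_point_of_convex_hull_affine_independent[OF S(2)] by simp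
  show "finite (verts T)" "\<not> affine_dependent (verts T)" "T = convex hull (verts T)"
    using S V by simp_all
  show "closed T" using S by (simp add: compact_convex_hull finite_imp_compact compact_imp_closed)
  show "verts T \<subseteq> T" using V S(3) hull_subset by metis
qed

lemma mesh_facts:
  assumes "simplicial_mesh \<T> \<Omega>"
  shows "finite \<T>" "\<And>T. T \<in> \<T> \<Longrightarrow> is_simplex T" "\<Union>\<T> = closure \<Omega>"
    "\<And>T1 T2. T1 \<in> \<T> \<Longrightarrow> T2 \<in> \<T> \<Longrightarrow> \<exists>S. S \<subseteq> verts T1 \<inter> verts T2 \<and> T1 \<inter> T2 = convex hull S"
  using assms unfolding simplicial_mesh_def by blast+

lemma finite_nodes:
  assumes "simplicial_mesh \<T> \<Omega>"
  shows "finite (nodes \<T>)"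
  unfolding nodes_def using mesh_facts(1,2)[OF assms] simplex_verts(1) by (intro finite_UN_I) blast+



lemma S1D:
  assumes "f \<in> S1 \<T>"
  shows "continuous_on (\<Union>\<T>) f" "\<And>T. T \<in> \<T> \<Longrightarrow> \<exists>a c. \<forall>x\<in>T. f x = a \<bullet> x + c"
    "\<And>x. x \<notin> \<Union>\<T> \<Longrightarrow> f x = 0"
proof -
  have H: "continuous_on (\<Union>\<T>) f \<and> (\<forall>T\<in>\<T>. \<exists>a c. \<forall>x\<in>T. f x = a \<bullet> x + c) \<and> (\<forall>x. x \<notin> \<Union>\<T> \<longrightarrow> f x = 0)"
    using assms unfolding S1_def by (rule CollectD)
  show "continuous_on (\<Union>\<T>) f" using H by (rule conjunct1)
  show "\<And>T. T \<in> \<T> \<Longrightarrow> \<exists>a c. \<forall>x\<in>T. f x = a \<bullet> x + c" using H by (intro bspec[OF conjunct1[OF conjunct2[OF H]]])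
  show "\<And>x. x \<notin> \<Union>\<T> \<Longrightarrow> f x = 0" using conjunct2[OF conjunct2[OF H]] by blast
qed
lemma S1_unique:
  fixes \<T> :: "'a::euclidean_space set set"
  assumes M: "simplicial_mesh \<T> \<Omega>" and f1: "f1 \<in> S1 \<T>" and f2: "f2 \<in> S1 \<T>"
    and eq: "\<forall>z\<in>nodes \<T>. f1 z = f2 z"
  shows "f1 = f2"
proof
  fix x
  show "f1 x = f2 x"
  proof (cases "x \<in> \<Union>\<T>")
    case False then show ?thesis using S1D(3)[OF f1] S1D(3)[OF f2] by simp
  next
    case True
    then obtain T where T: "T \<in> \<T>" "x \<in> T" by auto
    have sx: "is_simplex T" using mesh_facts(2)[OF M T(1)] .
    obtain a1 c1 where a1: "\<forall>y\<in>T. f1 y = a1 \<bullet> y + c1" using S1D(2)[OF f1 T(1)] by blast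
    obtain a2 c2 where a2: "\<forall>y\<in>T. f2 y = a2 \<bullet> y + c2" using S1D(2)[OF f2 T(1)] by blast
    have xh: "x \<in> convex hull (verts T)" using T(2) simplex_verts(3)[OF sx, symmetric] by simp
    obtain u where u0: "\<forall>v\<in>verts T. 0 \<le> u v" and u': "\<forall>a c. a \<bullet> x + c = (\<Sum>v\<in>verts T. u v * (a \<bullet> v + c))"
      using affine_on_hull2[OF simplex_verts(1)[OF sx] xh] by blast
    note u = u'[rule_format]
    have vn: "verts T \<subseteq> nodes \<T>" using T(1) unfolding nodes_def by blast
    have vT: "verts T \<subseteq> T" using simplex_verts(5)[OF sx] .
    have "f1 x = a1 \<bullet> x + c1" using a1 T by blast
    also have "\<dots> = (\<Sum>v\<in>verts T. u v * (a1 \<bullet> v + c1))" by (rule u)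
    also have "\<dots> = (\<Sum>v\<in>verts T. u v * f1 v)"
    proof (rule sum.cong[OF refl])
      fix v assume "v \<in> verts T" then have "v \<in> T" using vT by blast
      then show "u v * (a1 \<bullet> v + c1) = u v * f1 v" using a1 by metis
    qed
    also have "\<dots> = (\<Sum>v\<in>verts T. u v * f2 v)"
    proof (rule sum.cong[OF refl])
      fix v assume "v \<in> verts T" then have "f1 v = f2 v" using eq vn by blast
      then show "u v * f1 v = u v * f2 v" by simp
    qed
    also have "\<dots> = (\<Sum>v\<in>verts T. u v * (a2 \<bullet> v + c2))"
    proof (rule sum.cong[OF refl])
      fix v assume "v \<in> verts T" then have "v \<in> T" using vT by blast
      then show "u v * f2 v = u v * (a2 \<bullet> v + c2)" using a2 by metis
    qed
    also have "\<dots> = a2 \<bullet> x + c2" by (rule u[symmetric])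
    also have "\<dots> = f2 x" using a2 T by metis
    finally show ?thesis .
  qed
qed




lemma S1_exists:
  fixes \<T> :: "'a::euclidean_space set set" and g :: "'a \<Rightarrow> real"
  assumes M: "simplicial_mesh \<T> \<Omega>" and gnn: "\<forall>z\<in>nodes \<T>. 0 \<le> g z"
  shows "\<exists>f\<in>S1 \<T>. (\<forall>z\<in>nodes \<T>. f z = g z) \<and> (\<forall>x. 0 \<le> f x)"
proof -
  define coef where "coef T = (SOME p. \<forall>v\<in>verts T. fst p \<bullet> v + snd p = g v)" for T
  have coef: "\<forall>v\<in>verts T. fst (coef T) \<bullet> v + snd (coef T) = g v" if "T \<in> \<T>" for T
  proof -
    have sx: "is_simplex T" using mesh_facts(2)[OF M that] .
    obtain a c where "\<forall>v\<in>verts T. a \<bullet> v + c = g v"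
      using affine_interp_exists[OF simplex_verts(2)[OF sx]] by blast
    then have "\<exists>p. \<forall>v\<in>verts T. fst p \<bullet> v + snd p = g v" by (intro exI[of _ "(a,c)"]) auto
    then show ?thesis unfolding coef_def by (rule someI_ex)
  qed
  define F where "F x = (if x \<in> \<Union>\<T> then (let T = (SOME T. T \<in> \<T> \<and> x \<in> T) in
      fst (coef T) \<bullet> x + snd (coef T)) else 0)" for x
  have hullval: "fst (coef T) \<bullet> x + snd (coef T) = (\<Sum>v\<in>S. u v * g v)"
    if "T \<in> \<T>" "S \<subseteq> verts T" "finite S" "\<forall>a c. a \<bullet> x + c = (\<Sum>v\<in>S. u v * (a \<bullet> v + c))"
    for T S x u
  proof -
    have "fst (coef T) \<bullet> x + snd (coef T) = (\<Sum>v\<in>S. u v * (fst (coef T) \<bullet> v + snd (coef T)))"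
      using that(4) by blast
    also have "\<dots> = (\<Sum>v\<in>S. u v * g v)"
    proof (rule sum.cong[OF refl])
      fix v assume "v \<in> S" then have "v \<in> verts T" using that(2) by blast
      then show "u v * (fst (coef T) \<bullet> v + snd (coef T)) = u v * g v" using coef[OF that(1)] by metis
    qed
    finally show ?thesis .
  qed
  have key: "F x = fst (coef T) \<bullet> x + snd (coef T)" if T: "T \<in> \<T>" "x \<in> T" for T x
  proof -
    define T' where "T' = (SOME T. T \<in> \<T> \<and> x \<in> T)"
    have T': "T' \<in> \<T>" "x \<in> T'" unfolding T'_def using someI[of "\<lambda>T. T \<in> \<T> \<and> x \<in> T"] T by auto
    have Fx: "F x = fst (coef T') \<bullet> x + snd (coef T')" using T unfolding F_def T'_def[symmetric] by auto
    obtain S where S: "S \<subseteq> verts T \<inter> verts T'" "T \<inter> T' = convex hull S"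
      using mesh_facts(4)[OF M T(1) T'(1)] by blast
    have fS: "finite S" using S(1) simplex_verts(1)[OF mesh_facts(2)[OF M T(1)]] finite_subset by blast
    have xS: "x \<in> convex hull S" using S(2) T(2) T'(2) by blast
    obtain u where u0: "\<forall>v\<in>S. 0 \<le> u v" and u: "\<forall>a c. a \<bullet> x + c = (\<Sum>v\<in>S. u v * (a \<bullet> v + c))"
      using affine_on_hull2[OF fS xS] by blast
    have "S \<subseteq> verts T" "S \<subseteq> verts T'" using S(1) by blast+
    then show ?thesis using Fx hullval[OF T(1) _ fS u] hullval[OF T'(1) _ fS u] by metis
  qed
  have "F \<in> S1 \<T>"
    unfolding S1_def
  proof (intro CollectI conjI ballI allI impI)
    have c: "continuous_on (\<Union>T\<in>\<T>. T) F"
    proof (rule continuous_on_closed_Union)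
      show "finite \<T>" using mesh_facts(1)[OF M] .
      fix T assume T: "T \<in> \<T>"
      show "closed T" using simplex_verts(4)[OF mesh_facts(2)[OF M T]] .
      have "continuous_on T (\<lambda>x. fst (coef T) \<bullet> x + snd (coef T))" by (intro continuous_intros)
      then show "continuous_on T F" by (rule continuous_on_eq) (use key[OF T] in simp)
    qed
    then show "continuous_on (\<Union>\<T>) F" by simp
  next
    fix T assume T: "T \<in> \<T>"
    show "\<exists>a c. \<forall>x\<in>T. F x = a \<bullet> x + c" using key[OF T] by blast
  next
    fix x assume "x \<notin> \<Union>\<T>" then show "F x = 0" unfolding F_def by simp
  qed
  moreover have "F z = g z" if zN: "z \<in> nodes \<T>" for z
  proof -
    obtain T where T: "T \<in> \<T>" "z \<in> verts T" using zN unfolding nodes_def by blast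
    have "z \<in> T" using T(2) simplex_verts(5)[OF mesh_facts(2)[OF M T(1)]] by blast
    then have "F z = fst (coef T) \<bullet> z + snd (coef T)" using key[OF T(1)] by blast
    also have "\<dots> = g z" using coef[OF T(1)] T(2) by blast
    finally show ?thesis .
  qed
  moreover have "0 \<le> F x" for x
  proof (cases "x \<in> \<Union>\<T>")
    case False then show ?thesis unfolding F_def by simp
  next
    case True
    then obtain T where T: "T \<in> \<T>" "x \<in> T" by auto
    have sx: "is_simplex T" using mesh_facts(2)[OF M T(1)] .
    have xh: "x \<in> convex hull (verts T)" using T(2) simplex_verts(3)[OF sx, symmetric] by simp
    obtain u where u0: "\<forall>v\<in>verts T. 0 \<le> u v" and u: "\<forall>a c. a \<bullet> x + c = (\<Sum>v\<in>verts T. u v * (a \<bullet> v + c))"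
      using affine_on_hull2[OF simplex_verts(1)[OF sx] xh] by blast
    have "F x = (\<Sum>v\<in>verts T. u v * g v)"
      using key[OF T] hullval[OF T(1) subset_refl simplex_verts(1)[OF sx] u] by metis
    also have "\<dots> \<ge> 0"
    proof (rule sum_nonneg)
      fix v assume v: "v \<in> verts T"
      then have "v \<in> nodes \<T>" using T(1) unfolding nodes_def by blast
      then show "0 \<le> u v * g v" using u0 gnn v by simp
    qed
    finally show ?thesis .
  qed
  ultimately show ?thesis by blast
qed

lemma hat_props:
  fixes \<T> :: "'a::euclidean_space set set"
  assumes M: "simplicial_mesh \<T> \<Omega>" and z: "z \<in> nodes \<T>"
  shows "hat \<T> z \<in> S1 \<T>" "\<And>z'. z' \<in> nodes \<T> \<Longrightarrow> hat \<T> z z' = (if z' = z then 1 else 0)"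
    "\<And>x. 0 \<le> hat \<T> z x"
proof -
  obtain f where f: "f \<in> S1 \<T>" "\<forall>z'\<in>nodes \<T>. f z' = (if z' = z then 1 else 0)" "\<forall>x. 0 \<le> f x"
  proof -
    have "\<forall>z'\<in>nodes \<T>. 0 \<le> (if z' = z then 1 else 0::real)" by simp
    from S1_exists[OF M this] show ?thesis using that by blast
  qed
  have "hat \<T> z = f"
    unfolding hat_def
  proof (rule the_equality)
    show "f \<in> S1 \<T> \<and> (\<forall>z'\<in>nodes \<T>. f z' = (if z' = z then 1 else 0))" using f by auto
    fix g assume "g \<in> S1 \<T> \<and> (\<forall>z'\<in>nodes \<T>. g z' = (if z' = z then 1 else 0))"
    then show "g = f" using S1_unique[OF M _ f(1)] f(2) by auto
  qed
  then show "hat \<T> z \<in> S1 \<T>" "\<And>z'. z' \<in> nodes \<T> \<Longrightarrow> hat \<T> z z' = (if z' = z then 1 else 0)"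
    "\<And>x. 0 \<le> hat \<T> z x" using f by auto
qed



lemma cont_integrable:
  fixes f :: "'a::euclidean_space \<Rightarrow> real"
  assumes K: "compact K" and c: "continuous_on K f" and S: "S \<subseteq> K" "S \<in> lmeasurable"
  shows "f integrable_on S"
proof -
  obtain B where B: "\<forall>x\<in>K. norm (f x) \<le> B"
    using compact_imp_bounded[OF compact_continuous_image[OF c K]] unfolding bounded_iff by blast
  have m: "f \<in> borel_measurable (lebesgue_on S)"
    using continuous_imp_measurable_on_sets_lebesgue[OF continuous_on_subset[OF c S(1)]] S(2) by blast
  have "f absolutely_integrable_on S"
    by (rule measurable_bounded_by_integrable_imp_absolutely_integrable[OF m _ integrable_on_const[OF S(2)]])
       (use S(2) B S(1) in auto)
  then show ?thesis unfolding absolutely_integrable_on_def by blast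
qed

lemma measure_ball_pos':
  fixes y :: "'a::euclidean_space"
  assumes "r > 0"
  shows "0 < integral (ball y r) (\<lambda>x. 1::real)"
proof -
  have "measure lebesgue (ball y r) = integral (ball y r) (\<lambda>x. 1::real)"
    using lmeasure_integral[OF lmeasurable_ball] by blast
  moreover have "measure lebesgue (ball y r) = measure lborel (ball y r)" by (simp add: measure_completion)
  ultimately show ?thesis using content_ball_pos[OF assms, of y] by metis
qed

lemma hat_integral_pos:
  fixes \<T> :: "'a::euclidean_space set set"
  assumes M: "simplicial_mesh \<T> \<Omega>" and L: "lipschitz_domain \<Omega>" and z: "z \<in> nodes \<T>"
  shows "0 < integral \<Omega> (hat \<T> z)"
proof -
  let ?f = "hat \<T> z"
  have op: "open \<Omega>" and bd: "bounded \<Omega>" using L unfolding lipschitz_domain_def by blast+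
  have U: "\<Union>\<T> = closure \<Omega>" using mesh_facts(3)[OF M] .
  have K: "compact (closure \<Omega>)" using bd compact_closure by blast
  have c: "continuous_on (closure \<Omega>) ?f" using S1D(1)[OF hat_props(1)[OF M z]] U by simp
  have nn: "\<And>x. 0 \<le> ?f x" using hat_props(3)[OF M z] .
  have f1: "?f z = 1" using hat_props(2)[OF M z z] by simp
  have zc: "z \<in> closure \<Omega>"
  proof -
    obtain T where T: "T \<in> \<T>" "z \<in> verts T" using z unfolding nodes_def by blast
    have "z \<in> T" using T(2) simplex_verts(5)[OF mesh_facts(2)[OF M T(1)]] by blast
    then show ?thesis using T(1) U by blast
  qed
  obtain d where d: "d > 0" "\<forall>x'\<in>closure \<Omega>. dist x' z < d \<longrightarrow> dist (?f x') (?f z) < 1/2"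
    using c zc unfolding continuous_on_iff by (meson half_gt_zero zero_less_one)
  obtain y where y: "y \<in> \<Omega>" "dist y z < d/2" using zc d(1) unfolding closure_approachable
    by (meson half_gt_zero)
  obtain r where r: "r > 0" "ball y r \<subseteq> \<Omega>" using op y(1) unfolding open_contains_ball by blast
  define r' where "r' = min r (d/2)"
  have r': "r' > 0" "ball y r' \<subseteq> \<Omega>" using r d(1) unfolding r'_def by auto
  have big: "1/2 \<le> ?f x" if "x \<in> ball y r'" for x
  proof -
    have "dist x z < d"
      using that y(2) dist_triangle[of x z y] unfolding r'_def by (simp add: dist_commute)
    moreover have "x \<in> closure \<Omega>" using that r'(2) closure_subset by blast
    ultimately have "dist (?f x) 1 < 1/2" using d(2) f1 by metis
    then show ?thesis unfolding dist_real_def abs_less_iff by linarith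
  qed
  have iO: "?f integrable_on \<Omega>"
    by (rule cont_integrable[OF K c closure_subset lmeasurable_open[OF bd op]])
  have iB: "?f integrable_on ball y r'"
    by (rule cont_integrable[OF K c _ lmeasurable_ball]) (use r'(2) closure_subset in blast)
  have "0 < integral (ball y r') (\<lambda>x. 1/2::real)"
    using measure_ball_pos'[OF r'(1), of y] by simp
  also have "\<dots> \<le> integral (ball y r') ?f"
    by (rule integral_le[OF integrable_on_const[OF lmeasurable_ball] iB]) (use big in auto)
  also have "\<dots> \<le> integral \<Omega> ?f"
    by (rule integral_subset_le[OF r'(2) iB iO]) (use nn in auto)
  finally show ?thesis .
qed



lemma S1_scale:
  assumes "f \<in> S1 \<T>"
  shows "(\<lambda>x. f x * c) \<in> S1 \<T>"
  unfolding S1_def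
proof (intro CollectI conjI ballI allI impI)
  show "continuous_on (\<Union>\<T>) (\<lambda>x. f x * c)" using S1D(1)[OF assms] by (intro continuous_intros)
next
  fix T assume "T \<in> \<T>"
  then obtain a b where ab: "\<forall>x\<in>T. f x = a \<bullet> x + b" using S1D(2)[OF assms] by blast
  have "\<forall>x\<in>T. f x * c = (c *\<^sub>R a) \<bullet> x + b * c" using ab by (simp add: algebra_simps)
  then show "\<exists>a c'. \<forall>x\<in>T. f x * c = a \<bullet> x + c'" by blast
next
  fix x assume "x \<notin> \<Union>\<T>" then show "f x * c = 0" using S1D(3)[OF assms] by simp
qed

lemma test_S1v:
  fixes \<T> :: "'a::euclidean_space set set"
  assumes M: "simplicial_mesh \<T> \<Omega>" and z: "z \<in> nodes \<T>"
  shows "(\<lambda>x. hat \<T> z x *\<^sub>R e) \<in> S1v \<T>"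
  unfolding S1v_def
proof (intro CollectI allI)
  fix j
  show "(\<lambda>x. (hat \<T> z x *\<^sub>R e) $ j) \<in> S1 \<T>"
    using S1_scale[OF hat_props(1)[OF M z], of "e $ j"] by simp
qed

lemma lumped_local:
  fixes \<T> :: "'a::euclidean_space set set"
  assumes M: "simplicial_mesh \<T> \<Omega>" and z: "z \<in> nodes \<T>"
  shows "lumped \<T> \<Omega> \<psi> (\<lambda>x. hat \<T> z x *\<^sub>R e) = (\<psi> z \<bullet> e) * integral \<Omega> (hat \<T> z)"
proof -
  have fin: "finite (nodes \<T>)" using finite_nodes[OF M] .
  have eq: "interp \<T> (\<lambda>x. \<psi> x \<bullet> (hat \<T> z x *\<^sub>R e)) = (\<lambda>x. hat \<T> z x * (\<psi> z \<bullet> e))"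
  proof
    fix x
    have "interp \<T> (\<lambda>x. \<psi> x \<bullet> (hat \<T> z x *\<^sub>R e)) x
        = (\<Sum>z'\<in>nodes \<T>. (if z' = z then \<psi> z \<bullet> e * hat \<T> z x else 0))"
      unfolding interp_def
    proof (rule sum.cong[OF refl])
      fix z' assume z': "z' \<in> nodes \<T>"
      show "\<psi> z' \<bullet> (hat \<T> z z' *\<^sub>R e) * hat \<T> z' x = (if z' = z then \<psi> z \<bullet> e * hat \<T> z x else 0)"
        using hat_props(2)[OF M z z'] by simp
    qed
    also have "\<dots> = \<psi> z \<bullet> e * hat \<T> z x" using fin z by simp
    finally show "interp \<T> (\<lambda>x. \<psi> x \<bullet> (hat \<T> z x *\<^sub>R e)) x = hat \<T> z x * (\<psi> z \<bullet> e)" by simp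
  qed
  show ?thesis unfolding lumped_def eq by simp
qed



lemma cancel_pos: "(\<beta>::real) > 0 \<Longrightarrow> x * \<beta> = y * \<beta> \<Longrightarrow> x = y" by simp

lemma nam_nodal:
  fixes \<T> :: "'a::euclidean_space set set"
  assumes M: "simplicial_mesh \<T> \<Omega>" and L: "lipschitz_domain \<Omega>" and z: "z \<in> nodes \<T>"
    and st: "nam_step \<T> \<Omega> \<alpha> \<tau> k m w n"
  shows "((1 / k) *\<^sub>R (m (Suc n) z - m n z)) \<bullet> e =
           - (cross3 ((1 / 2) *\<^sub>R (m (Suc n) z + m n z)) ((1 / 2) *\<^sub>R (w (Suc n) z + w n z))) \<bullet> e"
    and "\<exists>H. \<tau> * (((1 / k) *\<^sub>R (w (Suc n) z - w n z)) \<bullet> e) =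
           (cross3 ((1 / 2) *\<^sub>R (m (Suc n) z + m n z)) H) \<bullet> e
         - \<alpha> * ((cross3 ((1 / 2) *\<^sub>R (m (Suc n) z + m n z)) ((1 / k) *\<^sub>R (m (Suc n) z - m n z))) \<bullet> e)
         - (cross3 ((1 / 2) *\<^sub>R (m (Suc n) z + m n z)) ((1 / 2) *\<^sub>R (w (Suc n) z + w n z))) \<bullet> e"
proof -
  define \<beta> where "\<beta> = integral \<Omega> (hat \<T> z)"
  have bp: "\<beta> > 0" unfolding \<beta>_def by (rule hat_integral_pos[OF M L z])
  define \<phi> where "\<phi> = (\<lambda>x. hat \<T> z x *\<^sub>R e)"
  have \<phi>S: "\<phi> \<in> S1v \<T>" unfolding \<phi>_def by (rule test_S1v[OF M z])
  have loc: "\<And>\<psi>. lumped \<T> \<Omega> \<psi> \<phi> = (\<psi> z \<bullet> e) * \<beta>"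
    unfolding \<phi>_def \<beta>_def by (rule lumped_local[OF M z])
  define H where "H = Ph \<T> \<Omega> (heff \<T> (\<lambda>x. (1 / 2) *\<^sub>R (m (Suc n) x + m n x)))"
  have st1: "\<forall>\<phi>\<in>S1v \<T>. lumped \<T> \<Omega> (\<lambda>x. (1 / k) *\<^sub>R (m (Suc n) x - m n x)) \<phi> =
      - lumped \<T> \<Omega> (\<lambda>x. cross3 ((1 / 2) *\<^sub>R (m (Suc n) x + m n x)) ((1 / 2) *\<^sub>R (w (Suc n) x + w n x))) \<phi>"
    and st2: "\<forall>\<psi>\<in>S1v \<T>. \<tau> * lumped \<T> \<Omega> (\<lambda>x. (1 / k) *\<^sub>R (w (Suc n) x - w n x)) \<psi> =
             lumped \<T> \<Omega> (\<lambda>x. cross3 ((1 / 2) *\<^sub>R (m (Suc n) x + m n x)) (H x)) \<psi>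
           - \<alpha> * lumped \<T> \<Omega> (\<lambda>x. cross3 ((1 / 2) *\<^sub>R (m (Suc n) x + m n x)) ((1 / k) *\<^sub>R (m (Suc n) x - m n x))) \<psi>
           - lumped \<T> \<Omega> (\<lambda>x. cross3 ((1 / 2) *\<^sub>R (m (Suc n) x + m n x)) ((1 / 2) *\<^sub>R (w (Suc n) x + w n x))) \<psi>"
    using st unfolding nam_step_def Let_def H_def by blast+
  have "(((1 / k) *\<^sub>R (m (Suc n) z - m n z)) \<bullet> e) * \<beta> =
        (- (cross3 ((1 / 2) *\<^sub>R (m (Suc n) z + m n z)) ((1 / 2) *\<^sub>R (w (Suc n) z + w n z))) \<bullet> e) * \<beta>"
    using bspec[OF st1 \<phi>S] unfolding loc by simp
  from cancel_pos[OF bp this] show "((1 / k) *\<^sub>R (m (Suc n) z - m n z)) \<bullet> e =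
           - (cross3 ((1 / 2) *\<^sub>R (m (Suc n) z + m n z)) ((1 / 2) *\<^sub>R (w (Suc n) z + w n z))) \<bullet> e"
    .
  have "\<tau> * ((((1 / k) *\<^sub>R (w (Suc n) z - w n z)) \<bullet> e) * \<beta>) =
           ((cross3 ((1 / 2) *\<^sub>R (m (Suc n) z + m n z)) (H z)) \<bullet> e) * \<beta>
         - \<alpha> * (((cross3 ((1 / 2) *\<^sub>R (m (Suc n) z + m n z)) ((1 / k) *\<^sub>R (m (Suc n) z - m n z))) \<bullet> e) * \<beta>)
         - ((cross3 ((1 / 2) *\<^sub>R (m (Suc n) z + m n z)) ((1 / 2) *\<^sub>R (w (Suc n) z + w n z))) \<bullet> e) * \<beta>"
    using bspec[OF st2 \<phi>S] unfolding loc .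
  then have "(\<tau> * (((1 / k) *\<^sub>R (w (Suc n) z - w n z)) \<bullet> e)) * \<beta> =
           ((cross3 ((1 / 2) *\<^sub>R (m (Suc n) z + m n z)) (H z)) \<bullet> e
         - \<alpha> * ((cross3 ((1 / 2) *\<^sub>R (m (Suc n) z + m n z)) ((1 / k) *\<^sub>R (m (Suc n) z - m n z))) \<bullet> e)
         - (cross3 ((1 / 2) *\<^sub>R (m (Suc n) z + m n z)) ((1 / 2) *\<^sub>R (w (Suc n) z + w n z))) \<bullet> e) * \<beta>"
    by (simp only: algebra_simps)
  note cc = cancel_pos[OF bp this]
  then show "\<exists>H. \<tau> * (((1 / k) *\<^sub>R (w (Suc n) z - w n z)) \<bullet> e) =
           (cross3 ((1 / 2) *\<^sub>R (m (Suc n) z + m n z)) H) \<bullet> e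
         - \<alpha> * ((cross3 ((1 / 2) *\<^sub>R (m (Suc n) z + m n z)) ((1 / k) *\<^sub>R (m (Suc n) z - m n z))) \<bullet> e)
         - (cross3 ((1 / 2) *\<^sub>R (m (Suc n) z + m n z)) ((1 / 2) *\<^sub>R (w (Suc n) z + w n z))) \<bullet> e"
    by (intro exI[of _ "H z"])
qed

lemma node_step:
  fixes a0 a1 b0 b1 H :: "real^3"
  assumes k: "k > 0" and tau: "\<tau> > 0"
    and E1: "\<And>e. ((1 / k) *\<^sub>R (a1 - a0)) \<bullet> e = - (cross3 ((1 / 2) *\<^sub>R (a1 + a0)) ((1 / 2) *\<^sub>R (b1 + b0))) \<bullet> e"
    and E2: "\<tau> * (((1 / k) *\<^sub>R (b1 - b0)) \<bullet> ((1 / 2) *\<^sub>R (a1 + a0))) =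
           (cross3 ((1 / 2) *\<^sub>R (a1 + a0)) H) \<bullet> ((1 / 2) *\<^sub>R (a1 + a0))
         - \<alpha> * ((cross3 ((1 / 2) *\<^sub>R (a1 + a0)) ((1 / k) *\<^sub>R (a1 - a0))) \<bullet> ((1 / 2) *\<^sub>R (a1 + a0)))
         - (cross3 ((1 / 2) *\<^sub>R (a1 + a0)) ((1 / 2) *\<^sub>R (b1 + b0))) \<bullet> ((1 / 2) *\<^sub>R (a1 + a0))"
  shows "a1 \<bullet> a1 = a0 \<bullet> a0" "a1 \<bullet> b1 = a0 \<bullet> b0"
proof -
  have c1: "(cross3 x y) \<bullet> x = 0" for x y :: "real^3" using dot_cross_self(1)[of x y] by (simp add: inner_commute)
  have c2: "(cross3 y x) \<bullet> x = 0" for x y :: "real^3" using dot_cross_self(3) .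
  define p where "p = (1 / 2) *\<^sub>R (a1 + a0)"
  define q where "q = (1 / 2) *\<^sub>R (b1 + b0)"
  define dm where "dm = (1 / k) *\<^sub>R (a1 - a0)"
  define dw where "dw = (1 / k) *\<^sub>R (b1 - b0)"
  have E1': "\<And>e. dm \<bullet> e = - (cross3 p q) \<bullet> e" using E1 unfolding p_def q_def dm_def .
  have E2': "\<tau> * (dw \<bullet> p) = (cross3 p H) \<bullet> p - \<alpha> * ((cross3 p dm) \<bullet> p) - (cross3 p q) \<bullet> p"
    using E2 unfolding p_def q_def dm_def dw_def .
  have "dm \<bullet> p = 0" using E1'[of p] c1[of p q] by simp
  then have "(a1 - a0) \<bullet> (a1 + a0) = 0" using k unfolding dm_def p_def by simp
  moreover have "(a1 - a0) \<bullet> (a1 + a0) = a1 \<bullet> a1 - a0 \<bullet> a0"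
    by (simp add: inner_add_right inner_diff_left inner_commute[of a0 a1])
  ultimately show "a1 \<bullet> a1 = a0 \<bullet> a0" by simp
  have "dm \<bullet> q = 0" using E1'[of q] c2[of p q] by simp
  then have g1: "(a1 - a0) \<bullet> (b1 + b0) = 0" using k unfolding dm_def q_def by simp
  have "\<tau> * (dw \<bullet> p) = 0" using E2' c1[of p H] c1[of p dm] c1[of p q] by simp
  then have "dw \<bullet> p = 0" using tau by simp
  then have g2: "(b1 - b0) \<bullet> (a1 + a0) = 0" using k unfolding dw_def p_def by simp
  have "a1 \<bullet> b1 - a0 \<bullet> b0 = ((a1 - a0) \<bullet> (b1 + b0) + (b1 - b0) \<bullet> (a1 + a0)) / 2"
    by (simp add: inner_add_right inner_diff_left inner_add_left inner_diff_right inner_commute algebra_simps)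
  then show "a1 \<bullet> b1 = a0 \<bullet> b0" using g1 g2 by simp
qed



theorem proposition3p3:
  fixes \<Omega> :: "'a::euclidean_space set" and \<T> :: "'a set set"
    and \<alpha> \<tau> k :: real and m w :: "nat \<Rightarrow> 'a \<Rightarrow> real^3" and v0 :: "'a \<Rightarrow> real^3" and i :: nat
  assumes "DIM('a) = 2 \<or> DIM('a) = 3"
    and "lipschitz_domain \<Omega>"
    and "simplicial_mesh \<T> \<Omega>"
    and "\<alpha> > 0" and "\<tau> > 0" and "k > 0"
    and "m 0 \<in> Mh \<T>" and "v0 \<in> Kh \<T> (m 0)"
    and "w 0 = interpv \<T> (\<lambda>x. cross3 (m 0 x) (v0 x))"
    and "\<forall>n\<le>i. m (Suc n) \<in> S1v \<T> \<and> w (Suc n) \<in> S1v \<T> \<and> nam_step \<T> \<Omega> \<alpha> \<tau> k m w n"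
  shows "m (Suc i) \<in> Mh \<T> \<and> w (Suc i) \<in> Kh \<T> (m (Suc i))"
proof -
  note L = assms(2) and M = assms(3) and tau = assms(5) and k = assms(6)
  have fin: "finite (nodes \<T>)" using finite_nodes[OF M] .
  have base: "\<forall>z\<in>nodes \<T>. m 0 z \<bullet> m 0 z = 1 \<and> m 0 z \<bullet> w 0 z = 0"
  proof
    fix z assume z: "z \<in> nodes \<T>"
    have "norm (m 0 z) = 1" using assms(7) z unfolding Mh_def by blast
    then have n1: "m 0 z \<bullet> m 0 z = 1" by (simp add: dot_square_norm)
    have "w 0 z = (\<Sum>z'\<in>nodes \<T>. hat \<T> z' z *\<^sub>R cross3 (m 0 z') (v0 z'))"
      unfolding assms(9) interpv_def ..
    also have "\<dots> = (\<Sum>z'\<in>nodes \<T>. if z' = z then cross3 (m 0 z) (v0 z) else 0)"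
    proof (rule sum.cong[OF refl])
      fix z' assume z': "z' \<in> nodes \<T>"
      show "hat \<T> z' z *\<^sub>R cross3 (m 0 z') (v0 z') = (if z' = z then cross3 (m 0 z) (v0 z) else 0)"
        using hat_props(2)[OF M z' z] by auto
    qed
    also have "\<dots> = cross3 (m 0 z) (v0 z)" using fin z by simp
    finally have "m 0 z \<bullet> w 0 z = 0" by (simp add: dot_cross_self)
    with n1 show "m 0 z \<bullet> m 0 z = 1 \<and> m 0 z \<bullet> w 0 z = 0" by blast
  qed
  have ind: "\<forall>z\<in>nodes \<T>. m n z \<bullet> m n z = 1 \<and> m n z \<bullet> w n z = 0" if "n \<le> Suc i" for n
    using that
  proof (induction n)
    case 0 then show ?case using base by simp
  next
    case (Suc n)
    have ni: "n \<le> i" using Suc.prems by simp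
    have IH: "\<forall>z\<in>nodes \<T>. m n z \<bullet> m n z = 1 \<and> m n z \<bullet> w n z = 0" using Suc.IH Suc.prems by simp
    have st: "nam_step \<T> \<Omega> \<alpha> \<tau> k m w n" using assms(10) ni by blast
    show ?case
    proof
      fix z assume z: "z \<in> nodes \<T>"
      obtain H where H: "\<tau> * (((1 / k) *\<^sub>R (w (Suc n) z - w n z)) \<bullet> ((1 / 2) *\<^sub>R (m (Suc n) z + m n z))) =
           (cross3 ((1 / 2) *\<^sub>R (m (Suc n) z + m n z)) H) \<bullet> ((1 / 2) *\<^sub>R (m (Suc n) z + m n z))
         - \<alpha> * ((cross3 ((1 / 2) *\<^sub>R (m (Suc n) z + m n z)) ((1 / k) *\<^sub>R (m (Suc n) z - m n z))) \<bullet> ((1 / 2) *\<^sub>R (m (Suc n) z + m n z)))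
         - (cross3 ((1 / 2) *\<^sub>R (m (Suc n) z + m n z)) ((1 / 2) *\<^sub>R (w (Suc n) z + w n z))) \<bullet> ((1 / 2) *\<^sub>R (m (Suc n) z + m n z))"
        using nam_nodal(2)[OF M L z st] by blast
      note ns = node_step[OF k tau nam_nodal(1)[OF M L z st] H]
      show "m (Suc n) z \<bullet> m (Suc n) z = 1 \<and> m (Suc n) z \<bullet> w (Suc n) z = 0"
        using ns IH z by simp
    qed
  qed
  have fin_i: "\<forall>z\<in>nodes \<T>. m (Suc i) z \<bullet> m (Suc i) z = 1 \<and> m (Suc i) z \<bullet> w (Suc i) z = 0"
    using ind[of "Suc i"] by simp
  have S: "m (Suc i) \<in> S1v \<T>" "w (Suc i) \<in> S1v \<T>" using assms(10) by blast+
  have "\<forall>z\<in>nodes \<T>. norm (m (Suc i) z) = 1"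
    using fin_i by (simp add: norm_eq_sqrt_inner)
  then show ?thesis using S fin_i unfolding Mh_def Kh_def by blast
qed

end
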